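(* Let $\mathcal F$ be a prime lattice filter of an MV-algebra $\mathcal L$. Then $\mathcal K(\mathcal F)\sqsubseteq\!\!\to\mathcal F=\mathcal F$.
   Context: $\mathcal L=(L,\oplus,\lnot,0)$ is an MV-algebra. We write $1=\lnot0$, $x\otimes y=\lnot(\lnot x\oplus\lnot y)$, and $x\to y=\lnot x\oplus y$, and use the usual lattice order. A lattice filter is a nonempty upward-closed subset closed under $\wedge$. It is prime if it is proper and $a\vee b\in\mathcal F$ implies $a\in\mathcal F$ or $b\in\mathcal F$. For an upward-closed set $\mathcal F$ and $a\in L$, let $\mathcal F_a=\{z: z\to a\notin\mathcal F\}$. The kernel of $\mathcal F$ is $\mathcal K(\mathcal F)=\{z : \forall a\notin\mathcal F,\ z\to a\notin\mathcal F\}$, which is contained in $\mathcal F$. For $\mathcal H\subseteq\mathcal G$ we put $\mathcal H\sqsubseteq\!\!\to\mathcal G=\bigcap_{a\in L\setminus\mathcal G}\mathcal H_a$, and in general $\mathcal H\sqsubseteq\!\!\to\mathcal G:=(\mathcal H\cap\mathcal G)\sqsubseteq\!\!\to\mathcal G$. *)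

theory Defs
  imports Main
begin

definition mv_algebra :: "('a \<Rightarrow> 'a \<Rightarrow> 'a) \<Rightarrow> ('a \<Rightarrow> 'a) \<Rightarrow> 'a \<Rightarrow> bool" where
  "mv_algebra oplus neg zero \<longleftrightarrow>
     (\<forall>x y z. oplus (oplus x y) z = oplus x (oplus y z)) \<and>
     (\<forall>x y. oplus x y = oplus y x) \<and>
     (\<forall>x. oplus x zero = x) \<and>
     (\<forall>x. neg (neg x) = x) \<and>
     (\<forall>x. oplus x (neg zero) = neg zero) \<and>
     (\<forall>x y. oplus (neg (oplus (neg x) y)) y = oplus (neg (oplus (neg y) x)) x)"

definition mv_one :: "('a \<Rightarrow> 'a) \<Rightarrow> 'a \<Rightarrow> 'a" where
  "mv_one neg zero = neg zero"

definition mv_otimes :: "('a \<Rightarrow> 'a \<Rightarrow> 'a) \<Rightarrow> ('a \<Rightarrow> 'a) \<Rightarrow> 'a \<Rightarrow> 'a \<Rightarrow> 'a" where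
  "mv_otimes oplus neg x y = neg (oplus (neg x) (neg y))"

definition mv_imp :: "('a \<Rightarrow> 'a \<Rightarrow> 'a) \<Rightarrow> ('a \<Rightarrow> 'a) \<Rightarrow> 'a \<Rightarrow> 'a \<Rightarrow> 'a" where
  "mv_imp oplus neg x y = oplus (neg x) y"

definition mv_le :: "('a \<Rightarrow> 'a \<Rightarrow> 'a) \<Rightarrow> ('a \<Rightarrow> 'a) \<Rightarrow> 'a \<Rightarrow> 'a \<Rightarrow> 'a \<Rightarrow> bool" where
  "mv_le oplus neg zero x y \<longleftrightarrow> mv_imp oplus neg x y = mv_one neg zero"

definition mv_inf :: "('a \<Rightarrow> 'a \<Rightarrow> 'a) \<Rightarrow> ('a \<Rightarrow> 'a) \<Rightarrow> 'a \<Rightarrow> 'a \<Rightarrow> 'a" where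
  "mv_inf oplus neg x y = mv_otimes oplus neg x (oplus (neg x) y)"

definition mv_sup :: "('a \<Rightarrow> 'a \<Rightarrow> 'a) \<Rightarrow> ('a \<Rightarrow> 'a) \<Rightarrow> 'a \<Rightarrow> 'a \<Rightarrow> 'a" where
  "mv_sup oplus neg x y = oplus (neg (oplus (neg x) y)) y"

definition upward_closed :: "('a \<Rightarrow> 'a \<Rightarrow> 'a) \<Rightarrow> ('a \<Rightarrow> 'a) \<Rightarrow> 'a \<Rightarrow> 'a set \<Rightarrow> bool" where
  "upward_closed oplus neg zero F \<longleftrightarrow>
     (\<forall>x y. x \<in> F \<longrightarrow> mv_le oplus neg zero x y \<longrightarrow> y \<in> F)"

definition lattice_filter :: "('a \<Rightarrow> 'a \<Rightarrow> 'a) \<Rightarrow> ('a \<Rightarrow> 'a) \<Rightarrow> 'a \<Rightarrow> 'a set \<Rightarrow> bool" where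
  "lattice_filter oplus neg zero F \<longleftrightarrow>
     F \<noteq> {} \<and> upward_closed oplus neg zero F \<and>
     (\<forall>x y. x \<in> F \<longrightarrow> y \<in> F \<longrightarrow> mv_inf oplus neg x y \<in> F)"

definition prime_lattice_filter :: "('a \<Rightarrow> 'a \<Rightarrow> 'a) \<Rightarrow> ('a \<Rightarrow> 'a) \<Rightarrow> 'a \<Rightarrow> 'a set \<Rightarrow> bool" where
  "prime_lattice_filter oplus neg zero F \<longleftrightarrow>
     lattice_filter oplus neg zero F \<and> F \<noteq> UNIV \<and>
     (\<forall>a b. mv_sup oplus neg a b \<in> F \<longrightarrow> a \<in> F \<or> b \<in> F)"

definition sub_at :: "('a \<Rightarrow> 'a \<Rightarrow> 'a) \<Rightarrow> ('a \<Rightarrow> 'a) \<Rightarrow> 'a set \<Rightarrow> 'a \<Rightarrow> 'a set" where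
  "sub_at oplus neg F a = {z. mv_imp oplus neg z a \<notin> F}"

definition kernel :: "('a \<Rightarrow> 'a \<Rightarrow> 'a) \<Rightarrow> ('a \<Rightarrow> 'a) \<Rightarrow> 'a set \<Rightarrow> 'a set" where
  "kernel oplus neg F = {z. \<forall>a. a \<notin> F \<longrightarrow> mv_imp oplus neg z a \<notin> F}"

definition sqimp :: "('a \<Rightarrow> 'a \<Rightarrow> 'a) \<Rightarrow> ('a \<Rightarrow> 'a) \<Rightarrow> 'a set \<Rightarrow> 'a set \<Rightarrow> 'a set" where
  "sqimp oplus neg H G = (\<Inter>a \<in> - G. sub_at oplus neg (H \<inter> G) a)"

end

theory Submission
  imports Defs
begin

theorem mainTheorem5:
  fixes oplus :: "'a \<Rightarrow> 'a \<Rightarrow> 'a" and neg :: "'a \<Rightarrow> 'a" and zero :: 'a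
    and F :: "'a set"
  assumes "mv_algebra oplus neg zero"
    and "prime_lattice_filter oplus neg zero F"
  shows "sqimp oplus neg (kernel oplus neg F) F = F"
proof -
  note A = assms(1)[unfolded mv_algebra_def]
  have assoc: "\<And>x y z. oplus (oplus x y) z = oplus x (oplus y z)" using A by blast
  have comm: "\<And>x y. oplus x y = oplus y x" using A by blast
  have z0: "\<And>x. oplus x zero = x" using A by blast
  have nn: "\<And>x. neg (neg x) = x" using A by blast
  have top: "\<And>x. oplus x (neg zero) = neg zero" using A by blast
  have ax6: "\<And>x y. oplus (neg (oplus (neg x) y)) y = oplus (neg (oplus (neg y) x)) x" using A by blast
  have compl: "\<And>y. oplus (neg y) y = neg zero"
  proof -
    fix y
    have "oplus (neg (oplus (neg (neg zero)) y)) y = oplus (neg (oplus (neg y) (neg zero))) (neg zero)"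
      by (rule ax6)
    then show "oplus (neg y) y = neg zero" using nn top comm z0 by metis
  qed
  have FF: "F \<noteq> {}" "upward_closed oplus neg zero F"
    using assms(2) unfolding prime_lattice_filter_def lattice_filter_def by auto
  have up: "\<And>x y. x \<in> F \<Longrightarrow> oplus (neg x) y = neg zero \<Longrightarrow> y \<in> F"
    using FF(2) unfolding upward_closed_def mv_le_def mv_imp_def mv_one_def by blast
  have oneF: "neg zero \<in> F"
  proof -
    obtain x where "x \<in> F" using FF(1) by blast
    then show ?thesis using up top by blast
  qed
  have KF: "kernel oplus neg F \<subseteq> F"
  proof
    fix z assume z: "z \<in> kernel oplus neg F"
    show "z \<in> F"
    proof (rule ccontr)
      assume "z \<notin> F"
      then have "mv_imp oplus neg z z \<notin> F" using z unfolding kernel_def by blast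
      then show False using oneF compl comm unfolding mv_imp_def by metis
    qed
  qed
  have oneK: "neg zero \<in> kernel oplus neg F"
    unfolding kernel_def mv_imp_def using nn comm z0 by simp
  show ?thesis
  proof
    show "sqimp oplus neg (kernel oplus neg F) F \<subseteq> F"
    proof
      fix z assume z: "z \<in> sqimp oplus neg (kernel oplus neg F) F"
      show "z \<in> F"
      proof (rule ccontr)
        assume "z \<notin> F"
        then have "mv_imp oplus neg z z \<notin> kernel oplus neg F \<inter> F"
          using z unfolding sqimp_def sub_at_def by blast
        moreover have "mv_imp oplus neg z z = neg zero" using compl comm unfolding mv_imp_def by metis
        ultimately show False using oneK oneF by simp
      qed
    qed
  next
    show "F \<subseteq> sqimp oplus neg (kernel oplus neg F) F"
    proof
      fix z assume z: "z \<in> F"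
      show "z \<in> sqimp oplus neg (kernel oplus neg F) F"
        unfolding sqimp_def sub_at_def
      proof (intro INT_I CollectI)
        fix a assume a: "a \<in> - F"
        show "mv_imp oplus neg z a \<notin> kernel oplus neg F \<inter> F"
        proof
          assume k: "mv_imp oplus neg z a \<in> kernel oplus neg F \<inter> F"
          then have "mv_imp oplus neg (mv_imp oplus neg z a) a \<notin> F"
            using a unfolding kernel_def by blast
          moreover have "mv_imp oplus neg (mv_imp oplus neg z a) a \<in> F"
          proof (rule up[OF z])
            have "oplus (neg z) (mv_imp oplus neg (mv_imp oplus neg z a) a)
                = oplus (neg (neg (oplus (neg z) a))) (neg (oplus (neg z) a))"
              unfolding mv_imp_def using assoc comm nn by metis
            also have "\<dots> = neg zero" by (rule compl)
            finally show "oplus (neg z) (mv_imp oplus neg (mv_imp oplus neg z a) a) = neg zero" .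
          qed
          ultimately show False by blast
        qed
      qed
    qed
  qed
qed

end
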